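(* Let $W$ be the affine Weyl group of type $C_n^{(1)}$ and let $w=t_q\overline w\in W$. Then $\mathcal{L}_{\Lambda_0}(\sigma_nw)=\mathcal{L}_{\Lambda_0}(w)$.
   Context: Affine Kac–Moody setting of type $C_n^{(1)}$ ($n\ge2$): $\mathfrak h^*$ contains simple roots $\alpha_0,\dots,\alpha_n$, marks $(a_0,\dots,a_n)=(1,2,\dots,2,1)$, $(a_0^\vee,\dots,a_n^\vee)=(1,\dots,1)$, null root $\delta=\sum a_i\alpha_i$, canonical central element $c=\sum a_i^\vee\alpha_i^\vee$, Coxeter number $h=2n$, affine fundamental weight $\Lambda_0$, and $\rho^\vee\in\mathfrak h$ with $\langle\alpha_i,\rho^\vee\rangle=1$ for all $i$. The finite part $V_0=\mathbb{R}^n$ with standard dot product, $\alpha_i=\frac1{\sqrt2}(\varepsilon_i-\varepsilon_{i+1})$ ($1\le i\le n-1$), $\alpha_n=\sqrt2\varepsilon_n$. For $x\in V_0$, $t_x(v)=v+\langle v,c\rangle x-((v|x)+\frac12|x|^2\langle v,c\rangle)\delta$. $W_0=\langle s_1,\dots,s_n\rangle$, $M=\sqrt2\mathbb{Z}\varepsilon_1\oplus\dots\oplus\sqrt2\mathbb{Z}\varepsilon_n$, $W=T(M)\rtimes W_0$, each $w\in W$ written uniquely $w=t_q\overline w$. $\omega_n=\frac{\sqrt2}{2}(\varepsilon_1+\dots+\varepsilon_n)$, and $\sigma_n=t_{\omega_n}w_{0,n}w_0$, where $w_0$ is the longest element of $W_0$ and $w_{0,n}$ the longest element of $\langle s_1,\dots,s_{n-1}\rangle$.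 $\mathcal{L}_{\Lambda_0}(g)=\langle\Lambda_0-g\Lambda_0,\rho^\vee\rangle$ for $g\in GL(\mathfrak h^* )$. *)

theory Defs
  imports Complex_Main
begin

text \<open>The finite part V_0 = R^n is modelled as functions nat => real, where
coordinate j (1 <= j <= n) is the coefficient of epsilon_j; vectors of V_0 are
those vanishing outside {1..n}.  An element (x, a, b) of the type hstar stands
for x + a Lambda_0 + b delta.  Thus the pairing with c is the middle coordinate.\<close>

type_synonym vec0 = "nat \<Rightarrow> real"
type_synonym hstar = "vec0 \<times> real \<times> real"

definition eps :: "nat \<Rightarrow> vec0" where
  "eps i = (\<lambda>j. if j = i then 1 else 0)"

definition vadd :: "vec0 \<Rightarrow> vec0 \<Rightarrow> vec0" where
  "vadd x y = (\<lambda>j. x j + y j)"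

definition vscale :: "real \<Rightarrow> vec0 \<Rightarrow> vec0" where
  "vscale c x = (\<lambda>j. c * x j)"

definition vsub :: "vec0 \<Rightarrow> vec0 \<Rightarrow> vec0" where
  "vsub x y = (\<lambda>j. x j - y j)"

definition dot :: "nat \<Rightarrow> vec0 \<Rightarrow> vec0 \<Rightarrow> real" where
  "dot n x y = (\<Sum>j=1..n. x j * y j)"

definition froot :: "nat \<Rightarrow> nat \<Rightarrow> vec0" where
  "froot n i = (if i < n then vscale (1 / sqrt 2) (vsub (eps i) (eps (i + 1)))
                else vscale (sqrt 2) (eps n))"

definition srefl :: "nat \<Rightarrow> nat \<Rightarrow> vec0 \<Rightarrow> vec0" where
  "srefl n i v = vsub v (vscale (2 * dot n v (froot n i) / dot n (froot n i) (froot n i)) (froot n i))"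

definition wordprod :: "nat \<Rightarrow> nat list \<Rightarrow> vec0 \<Rightarrow> vec0" where
  "wordprod n ws = foldr (\<lambda>i g. srefl n i \<circ> g) ws id"

definition gen :: "nat \<Rightarrow> nat set \<Rightarrow> (vec0 \<Rightarrow> vec0) set" where
  "gen n I = {wordprod n ws | ws. set ws \<subseteq> I}"

definition wlen :: "nat \<Rightarrow> nat set \<Rightarrow> (vec0 \<Rightarrow> vec0) \<Rightarrow> nat" where
  "wlen n I w = (LEAST k. \<exists>ws. set ws \<subseteq> I \<and> length ws = k \<and> wordprod n ws = w)"

definition longest :: "nat \<Rightarrow> nat set \<Rightarrow> vec0 \<Rightarrow> vec0" where
  "longest n I = (THE w. w \<in> gen n I \<and> (\<forall>u \<in> gen n I. wlen n I u \<le> wlen n I w))"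

definition W0 :: "nat \<Rightarrow> (vec0 \<Rightarrow> vec0) set" where
  "W0 n = gen n {1..n}"

definition w0 :: "nat \<Rightarrow> vec0 \<Rightarrow> vec0" where
  "w0 n = longest n {1..n}"

definition w0n :: "nat \<Rightarrow> vec0 \<Rightarrow> vec0" where
  "w0n n = longest n {1..n-1}"

definition lift :: "(vec0 \<Rightarrow> vec0) \<Rightarrow> hstar \<Rightarrow> hstar" where
  "lift g v = (case v of (x, a, b) \<Rightarrow> (g x, a, b))"

definition transl :: "nat \<Rightarrow> vec0 \<Rightarrow> hstar \<Rightarrow> hstar" where
  "transl n q v = (case v of (x, a, b) \<Rightarrow>
      (vadd x (vscale a q), a, b - (dot n x q + (1/2) * dot n q q * a)))"

definition Mlat :: "nat \<Rightarrow> vec0 set" where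
  "Mlat n = {q. (\<forall>j. j \<notin> {1..n} \<longrightarrow> q j = 0) \<and>
                (\<forall>j \<in> {1..n}. \<exists>k::int. q j = sqrt 2 * of_int k)}"

definition Waff :: "nat \<Rightarrow> (hstar \<Rightarrow> hstar) set" where
  "Waff n = {transl n q \<circ> lift u | q u. q \<in> Mlat n \<and> u \<in> W0 n}"

definition omega_n :: "nat \<Rightarrow> vec0" where
  "omega_n n = (\<lambda>j. if j \<in> {1..n} then sqrt 2 / 2 else 0)"

definition sigma_n :: "nat \<Rightarrow> hstar \<Rightarrow> hstar" where
  "sigma_n n = transl n (omega_n n) \<circ> lift (w0n n) \<circ> lift (w0 n)"

definition hadd :: "hstar \<Rightarrow> hstar \<Rightarrow> hstar" where
  "hadd u v = (case u of (x, a, b) \<Rightarrow> case v of (y, c, d) \<Rightarrow> (vadd x y, a + c, b + d))"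

definition hscale :: "real \<Rightarrow> hstar \<Rightarrow> hstar" where
  "hscale t u = (case u of (x, a, b) \<Rightarrow> (vscale t x, t * a, t * b))"

definition hsub :: "hstar \<Rightarrow> hstar \<Rightarrow> hstar" where
  "hsub u v = (case u of (x, a, b) \<Rightarrow> case v of (y, c, d) \<Rightarrow> (vsub x y, a - c, b - d))"

definition Lambda0 :: hstar where "Lambda0 = ((\<lambda>_. 0), 1, 0)"

definition delta :: hstar where "delta = ((\<lambda>_. 0), 0, 1)"

definition marks :: "nat \<Rightarrow> nat \<Rightarrow> real" where
  "marks n i = (if i = 0 \<or> i = n then 1 else 2)"

text \<open>Affine simple roots in h*: alpha_i for i >= 1 from V_0, and alpha_0 determined
by delta = sum a_i alpha_i.\<close>
definition aroot :: "nat \<Rightarrow> nat \<Rightarrow> hstar" where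
  "aroot n i = (if i = 0
     then ((\<lambda>j. - (\<Sum>k=1..n. marks n k * froot n k j)), 0, 1)
     else (froot n i, 0, 0))"

text \<open>L_{Lambda_0}(g) = <Lambda_0 - g Lambda_0, rho^vee>, where the pairing with
rho^vee is given as a linear functional rho on h*.\<close>
definition LL :: "(hstar \<Rightarrow> real) \<Rightarrow> (hstar \<Rightarrow> hstar) \<Rightarrow> real" where
  "LL rho g = rho (hsub Lambda0 (g Lambda0))"

end

theory Submission
  imports Defs
begin


definition tr :: "nat \<Rightarrow> nat \<Rightarrow> nat" where
  "tr k i = (if i = k then k+1 else if i = k+1 then k else i)"
definition sw :: "nat \<Rightarrow> vec0 \<Rightarrow> vec0" where
  "sw k x = (\<lambda>j. x (tr k j))"
definition ng :: "nat \<Rightarrow> vec0 \<Rightarrow> vec0" where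
  "ng n x = (\<lambda>j. if j = n then - x j else x j)"

lemma dot_eps: "i \<in> {1..n} \<Longrightarrow> dot n x (eps i) = x i"
  unfolding dot_def eps_def by (simp add: if_distrib cong: if_cong)

lemma dot_diff: "dot n x (vsub y z) = dot n x y - dot n x z"
  unfolding dot_def vsub_def by (simp add: algebra_simps sum_subtractf)
lemma dot_scale: "dot n x (vscale c y) = c * dot n x y"
  unfolding dot_def vscale_def by (simp add: algebra_simps sum_distrib_left)

lemma srefl_sw: assumes "1 \<le> k" "k < n" shows "srefl n k = sw k"
proof (rule ext)+
  fix v j
  have f: "froot n k = vscale (1 / sqrt 2) (vsub (eps k) (eps (k + 1)))" using assms by (simp add: froot_def)
  have d1: "dot n v (froot n k) = (v k - v (k+1)) / sqrt 2"
    using assms by (simp add: f dot_scale dot_diff dot_eps)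
  have "dot n (froot n k) (froot n k) = (froot n k k - froot n k (k+1)) / sqrt 2"
    using assms by (simp add: f dot_scale dot_diff dot_eps)
  also have "\<dots> = 1" by (simp add: f vscale_def vsub_def eps_def)
  finally have d2: "dot n (froot n k) (froot n k) = 1" .
  show "srefl n k v j = sw k v j"
    unfolding srefl_def d1 d2 sw_def tr_def
    by (auto simp: f vscale_def vsub_def eps_def field_simps)
qed

lemma srefl_ng: assumes "1 \<le> n" shows "srefl n n = ng n"
proof (rule ext)+
  fix v j
  have f: "froot n n = vscale (sqrt 2) (eps n)" by (simp add: froot_def)
  have d1: "dot n v (froot n n) = sqrt 2 * v n"
    using assms by (simp add: f dot_scale dot_eps)
  have d2: "dot n (froot n n) (froot n n) = 2"
    using assms by (simp add: f dot_scale dot_eps) (simp add: vscale_def eps_def)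
  show "srefl n n v j = ng n v j"
    unfolding srefl_def d1 d2 ng_def
    by (auto simp: f vscale_def vsub_def eps_def field_simps)
qed

lemma wordprod_Nil: "wordprod n [] = id" by (simp add: wordprod_def)
lemma wordprod_Cons: "wordprod n (k # ws) = srefl n k \<circ> wordprod n ws" by (simp add: wordprod_def)

definition sp :: "nat \<Rightarrow> nat set \<Rightarrow> (vec0 \<Rightarrow> vec0) \<Rightarrow> bool" where
  "sp n I w \<longleftrightarrow> (\<exists>\<pi> (\<epsilon>::nat \<Rightarrow> real). (\<forall>j\<in>{1..n}. \<pi> j \<in> {1..n}) \<and> inj_on \<pi> {1..n} \<and>
     (\<forall>j. \<epsilon> j = 1 \<or> \<epsilon> j = -1) \<and> (n \<notin> I \<longrightarrow> (\<forall>j. \<epsilon> j = 1)) \<and>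
     w = (\<lambda>x j. if j \<in> {1..n} then \<epsilon> j * x (\<pi> j) else x j))"

lemma tr_range: "1 \<le> k \<Longrightarrow> k < n \<Longrightarrow> j \<in> {1..n} \<Longrightarrow> tr k j \<in> {1..n}"
  by (auto simp: tr_def)
lemma tr_out: "1 \<le> k \<Longrightarrow> k < n \<Longrightarrow> j \<notin> {1..n} \<Longrightarrow> tr k j = j"
  by (auto simp: tr_def)
lemma tr_tr: "tr k (tr k j) = j" by (auto simp: tr_def)
lemma inj_tr: "inj (tr k)" by (metis injI tr_tr)

lemma sp_wordprod:
  assumes "1 \<le> n" "I \<subseteq> {1..n}" "set ws \<subseteq> I"
  shows "sp n I (wordprod n ws)"
  using assms(3)
proof (induction ws)
  case Nil
  show ?case unfolding sp_def wordprod_Nil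
    by (rule exI[of _ id], rule exI[of _ "\<lambda>_. 1"]) (auto simp: fun_eq_iff)
next
  case (Cons k ws)
  then obtain \<pi> and \<epsilon> :: "nat \<Rightarrow> real" where
    p1: "\<forall>j\<in>{1..n}. \<pi> j \<in> {1..n}" and p2: "inj_on \<pi> {1..n}" and
    p3: "\<forall>j. \<epsilon> j = 1 \<or> \<epsilon> j = -1" and p4: "n \<notin> I \<longrightarrow> (\<forall>j. \<epsilon> j = 1)" and
    p5: "wordprod n ws = (\<lambda>x j. if j \<in> {1..n} then \<epsilon> j * x (\<pi> j) else x j)"
    unfolding sp_def by auto
  have k: "k \<in> {1..n}" using Cons.prems assms(2) by auto
  show ?case
  proof (cases "k < n")
    case True
    have s: "srefl n k = sw k" using k True by (intro srefl_sw) auto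
    show ?thesis unfolding sp_def wordprod_Cons s p5
    proof (rule exI[of _ "\<pi> \<circ> tr k"], rule exI[of _ "\<epsilon> \<circ> tr k"], intro conjI)
      show "\<forall>j\<in>{1..n}. (\<pi> \<circ> tr k) j \<in> {1..n}" using p1 tr_range[of k n] k True by auto
      have "tr k ` {1..n} \<subseteq> {1..n}" using tr_range[of k n] k True by auto
      then show "inj_on (\<pi> \<circ> tr k) {1..n}"
        by (meson comp_inj_on inj_on_subset p2 inj_tr subset_UNIV)
      show "\<forall>j. (\<epsilon> \<circ> tr k) j = 1 \<or> (\<epsilon> \<circ> tr k) j = -1" using p3 by auto
      show "n \<notin> I \<longrightarrow> (\<forall>j. (\<epsilon> \<circ> tr k) j = 1)" using p4 by auto
      show "sw k \<circ> (\<lambda>x j. if j \<in> {1..n} then \<epsilon> j * x (\<pi> j) else x j) =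
        (\<lambda>x j. if j \<in> {1..n} then (\<epsilon> \<circ> tr k) j * x ((\<pi> \<circ> tr k) j) else x j)"
        using tr_range[of k n] tr_out[of k n] k True by (auto simp: fun_eq_iff sw_def)
    qed
  next
    case False
    then have kn: "k = n" using k by auto
    have s: "srefl n k = ng n" using kn assms(1) srefl_ng by auto
    show ?thesis unfolding sp_def wordprod_Cons s p5
    proof (rule exI[of _ "\<pi>"], rule exI[of _ "\<lambda>j. if j = n then - \<epsilon> j else \<epsilon> j"], intro conjI)
      show "\<forall>j\<in>{1..n}. \<pi> j \<in> {1..n}" using p1 by auto
      show "inj_on \<pi> {1..n}" by fact
      show "\<forall>j. (if j = n then - \<epsilon> j else \<epsilon> j) = 1 \<or> (if j = n then - \<epsilon> j else \<epsilon> j) = -1"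
        using p3 by (metis minus_minus)
      show "n \<notin> I \<longrightarrow> (\<forall>j. (if j = n then - \<epsilon> j else \<epsilon> j) = 1)" using Cons.prems kn by auto
      show "ng n \<circ> (\<lambda>x j. if j \<in> {1..n} then \<epsilon> j * x (\<pi> j) else x j) =
        (\<lambda>x j. if j \<in> {1..n} then (if j = n then - \<epsilon> j else \<epsilon> j) * x (\<pi> j) else x j)"
        using assms(1) by (auto simp: fun_eq_iff ng_def)
    qed
  qed
qed

datatype root = Mi nat nat | Pl nat nat | Si nat

fun rv :: "root \<Rightarrow> vec0 \<Rightarrow> real" where
  "rv (Mi i j) x = x i - x j"
| "rv (Pl i j) x = x i + x j"
| "rv (Si i) x = x i"

definition NP :: "root set \<Rightarrow> vec0 \<Rightarrow> nat" where
  "NP P x = card {\<beta>\<in>P. rv \<beta> x < 0}"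

lemma gen_iff: "w \<in> gen n I \<longleftrightarrow> (\<exists>ws. set ws \<subseteq> I \<and> w = wordprod n ws)"
  unfolding gen_def by auto

lemma longest_char:
  fixes P :: "root set" and a :: "nat \<Rightarrow> root" and v t :: vec0
  assumes fin: "finite P"
    and h1: "\<forall>k\<in>I. a k \<in> P"
    and h2: "\<forall>k\<in>I. \<forall>x. NP P (srefl n k x) + (if rv (a k) x < 0 then 1 else 0)
                        = NP P x + (if rv (a k) x > 0 then 1 else 0)"
    and h3: "NP P v = 0"
    and h4: "\<forall>w\<in>gen n I. (\<forall>k\<in>I. rv (a k) (w v) \<ge> 0) \<longrightarrow> w = id"
    and h5: "\<forall>w\<in>gen n I. (\<forall>k\<in>I. rv (a k) (w v) \<le> 0) \<longrightarrow> w v = t"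
    and h6: "\<forall>w1\<in>gen n I. \<forall>w2\<in>gen n I. w1 v = w2 v \<longrightarrow> w1 = w2"
    and h7: "\<forall>k\<in>I. srefl n k \<circ> srefl n k = id"
  shows "longest n I \<in> gen n I \<and> longest n I v = t"
proof -
  have up: "NP P (srefl n k x) \<le> NP P x + 1" if "k \<in> I" for k x
  proof -
    have "NP P (srefl n k x) + (if rv (a k) x < 0 then 1 else 0)
                        = NP P x + (if rv (a k) x > 0 then 1 else 0)" using h2 that by blast
    then show ?thesis by (auto split: if_splits)
  qed
  have A: "NP P (wordprod n ws v) \<le> length ws" if "set ws \<subseteq> I" for ws
    using that
  proof (induction ws)
    case Nil then show ?case using h3 by (simp add: wordprod_Nil)
  next
    case (Cons k ws)
    have k: "k \<in> I" and ws: "set ws \<subseteq> I" using Cons.prems by auto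
    have "NP P (wordprod n (k # ws) v) = NP P (srefl n k (wordprod n ws v))"
      by (simp add: wordprod_Cons)
    also have "\<dots> \<le> NP P (wordprod n ws v) + 1" using up[OF k] .
    also have "\<dots> \<le> length ws + 1" using Cons.IH[OF ws] by simp
    finally show ?case by simp
  qed
  have idg: "id \<in> gen n I" unfolding gen_iff by (rule exI[of _ "[]"]) (simp add: wordprod_Nil)
  have compg: "srefl n k \<circ> w \<in> gen n I" if kI: "k \<in> I" and wg: "w \<in> gen n I" for k w
  proof -
    obtain ws where "set ws \<subseteq> I" "w = wordprod n ws" using wg unfolding gen_iff by blast
    then show ?thesis unfolding gen_iff using kI
      by (intro exI[of _ "k # ws"]) (simp add: wordprod_Cons)
  qed
  have B: "\<forall>w\<in>gen n I. NP P (w v) = m \<longrightarrow> (\<exists>ws. set ws \<subseteq> I \<and> length ws = m \<and> wordprod n ws = w)" for m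
  proof (induction m)
    case 0
    show ?case
    proof (intro ballI impI)
      fix w assume w: "w \<in> gen n I" "NP P (w v) = 0"
      then have "{\<beta>\<in>P. rv \<beta> (w v) < 0} = {}" using fin unfolding NP_def by simp
      then have "\<forall>k\<in>I. rv (a k) (w v) \<ge> 0" using h1 by (metis (mono_tags, lifting) empty_iff mem_Collect_eq not_le)
      then have "w = id" using h4 w by auto
      then show "\<exists>ws. set ws \<subseteq> I \<and> length ws = 0 \<and> wordprod n ws = w"
        by (intro exI[of _ "[]"]) (simp add: wordprod_Nil)
    qed
  next
    case (Suc m)
    show ?case
    proof (intro ballI impI)
      fix w assume w: "w \<in> gen n I" "NP P (w v) = Suc m"
      have "\<not> (\<forall>k\<in>I. rv (a k) (w v) \<ge> 0)"
      proof
        assume "\<forall>k\<in>I. rv (a k) (w v) \<ge> 0"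
        then have "w = id" using h4 w by auto
        then show False using w h3 by simp
      qed
      then obtain k where k: "k \<in> I" "rv (a k) (w v) < 0" by (meson not_le)
      moreover have "NP P (srefl n k (w v)) + (if rv (a k) (w v) < 0 then 1 else 0)
                        = NP P (w v) + (if rv (a k) (w v) > 0 then 1 else 0)" using h2 k(1) by blast
      ultimately have "NP P (srefl n k (w v)) = m" using w(2) by simp
      then have "NP P ((srefl n k \<circ> w) v) = m" by simp
      from Suc.IH[rule_format, OF compg[OF k(1) w(1)] this]
      obtain ws where ws: "set ws \<subseteq> I" "length ws = m" "wordprod n ws = srefl n k \<circ> w"
        by blast
      have "wordprod n (k # ws) = (srefl n k \<circ> srefl n k) \<circ> w"
        by (simp add: wordprod_Cons ws(3) comp_assoc)
      also have "\<dots> = w" using h7 k by simp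
      finally show "\<exists>ws. set ws \<subseteq> I \<and> length ws = Suc m \<and> wordprod n ws = w"
        using ws k by (intro exI[of _ "k # ws"]) simp
    qed
  qed
  have L: "wlen n I w = NP P (w v)" if "w \<in> gen n I" for w
    unfolding wlen_def
  proof (rule Least_equality)
    show "\<exists>ws. set ws \<subseteq> I \<and> length ws = NP P (w v) \<and> wordprod n ws = w"
      using B[of "NP P (w v)", rule_format, OF that refl] .
    fix y assume "\<exists>ws. set ws \<subseteq> I \<and> length ws = y \<and> wordprod n ws = w"
    then obtain ws where ws: "set ws \<subseteq> I" "length ws = y" "wordprod n ws = w" by blast
    show "NP P (w v) \<le> y" using A[OF ws(1)] ws(2,3) by simp
  qed
  have bnd: "NP P x \<le> card P" for x
    unfolding NP_def by (rule card_mono[OF fin]) blast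
  define S where "S = (\<lambda>w. NP P (w v)) ` gen n I"
  have "S \<subseteq> {..card P}" unfolding S_def using bnd by blast
  then have finS: "finite S" using finite_subset by blast
  have neS: "S \<noteq> {}" using idg unfolding S_def by blast
  define M where "M = Max S"
  have "M \<in> S" unfolding M_def using Max_in[OF finS neS] .
  then obtain c where c: "c \<in> gen n I" "NP P (c v) = M"
    unfolding S_def by blast
  have leM: "NP P (w v) \<le> M" if "w \<in> gen n I" for w
  proof -
    have "NP P (w v) \<in> S" unfolding S_def using that by blast
    then show ?thesis unfolding M_def using Max_ge[OF finS] by blast
  qed
  have D: "w v = t" if wg: "w \<in> gen n I" and wM: "NP P (w v) = M" for w
  proof -
    have "\<forall>k\<in>I. rv (a k) (w v) \<le> 0"
    proof (intro ballI, rule ccontr)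
      fix k assume k: "k \<in> I" "\<not> rv (a k) (w v) \<le> 0"
      moreover have "NP P (srefl n k (w v)) + (if rv (a k) (w v) < 0 then 1 else 0)
                        = NP P (w v) + (if rv (a k) (w v) > 0 then 1 else 0)" using h2 k(1) by blast
      ultimately have "NP P (srefl n k (w v)) = M + 1" using wM by simp
      moreover have "NP P ((srefl n k \<circ> w) v) \<le> M" using leM[OF compg[OF k(1) wg]] .
      ultimately show False by simp
    qed
    then show ?thesis using h5 wg by blast
  qed
  have E: "longest n I = c"
    unfolding longest_def
  proof (rule the_equality)
    show "c \<in> gen n I \<and> (\<forall>u\<in>gen n I. wlen n I u \<le> wlen n I c)"
      using c L leM by auto
    fix w assume w: "w \<in> gen n I \<and> (\<forall>u\<in>gen n I. wlen n I u \<le> wlen n I w)"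
    then have "NP P (w v) = M" using c L leM by (metis le_antisym)
    then have "w v = c v" using D w c by auto
    then show "w = c" using h6 w c(1) by simp
  qed
  show ?thesis using E c D by auto
qed



lemma count_formula:
  assumes fin: "finite P" and aP: "a \<in> P"
    and fm: "\<forall>\<beta>\<in>P-{a}. f \<beta> \<in> P-{a}"
    and fi: "\<forall>\<beta>\<in>P-{a}. f (f \<beta>) = \<beta>"
    and fr: "\<forall>\<beta>\<in>P-{a}. rv \<beta> y = rv (f \<beta>) x"
    and ar: "rv a y = - rv a x"
  shows "NP P y + (if rv a x < 0 then 1 else 0) = NP P x + (if rv a x > 0 then 1 else 0)"
proof -
  define A where "A = P - {a}"
  have finA: "finite A" using fin A_def by simp
  have spl: "NP P z = card {\<beta>\<in>A. rv \<beta> z < 0} + (if rv a z < 0 then 1 else 0)" for z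
  proof (cases "rv a z < 0")
    case True
    then have "{\<beta>\<in>P. rv \<beta> z < 0} = insert a {\<beta>\<in>A. rv \<beta> z < 0}" using aP A_def by auto
    moreover have "card (insert a {\<beta>\<in>A. rv \<beta> z < 0}) = Suc (card {\<beta>\<in>A. rv \<beta> z < 0})"
      using finA A_def by (intro card_insert_disjoint) auto
    ultimately show ?thesis using True unfolding NP_def by simp
  next
    case False
    then have "{\<beta>\<in>P. rv \<beta> z < 0} = {\<beta>\<in>A. rv \<beta> z < 0}" using aP A_def by auto
    then show ?thesis using False unfolding NP_def by simp
  qed
  have inj: "inj_on f A" unfolding inj_on_def A_def using fi by metis
  have img: "f ` {\<beta>\<in>A. rv (f \<beta>) x < 0} = {\<gamma>\<in>A. rv \<gamma> x < 0}"
  proof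
    show "f ` {\<beta>\<in>A. rv (f \<beta>) x < 0} \<subseteq> {\<gamma>\<in>A. rv \<gamma> x < 0}" using fm A_def by auto
    show "{\<gamma>\<in>A. rv \<gamma> x < 0} \<subseteq> f ` {\<beta>\<in>A. rv (f \<beta>) x < 0}"
    proof
      fix \<gamma> assume g: "\<gamma> \<in> {\<gamma>\<in>A. rv \<gamma> x < 0}"
      then have "f \<gamma> \<in> A" "f (f \<gamma>) = \<gamma>" using fm fi A_def by auto
      then show "\<gamma> \<in> f ` {\<beta>\<in>A. rv (f \<beta>) x < 0}" using g by (metis (mono_tags, lifting) image_eqI mem_Collect_eq)
    qed
  qed
  have "card {\<beta>\<in>A. rv \<beta> y < 0} = card {\<beta>\<in>A. rv (f \<beta>) x < 0}"
    using fr A_def by (metis (no_types, lifting) Collect_cong)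
  also have "\<dots> = card (f ` {\<beta>\<in>A. rv (f \<beta>) x < 0})"
    by (rule card_image[symmetric], rule inj_on_subset[OF inj]) auto
  also have "\<dots> = card {\<gamma>\<in>A. rv \<gamma> x < 0}" using img by simp
  finally have C: "card {\<beta>\<in>A. rv \<beta> y < 0} = card {\<gamma>\<in>A. rv \<gamma> x < 0}" .
  show ?thesis using spl[of y] spl[of x] C ar by auto
qed

definition PA :: "nat \<Rightarrow> root set" where
  "PA n = {Mi i j | i j. 1 \<le> i \<and> i < j \<and> j \<le> n}"
definition PC :: "nat \<Rightarrow> root set" where
  "PC n = {Mi i j | i j. 1 \<le> i \<and> i < j \<and> j \<le> n} \<union> {Pl i j | i j. 1 \<le> i \<and> i < j \<and> j \<le> n}
     \<union> {Si i | i. 1 \<le> i \<and> i \<le> n}"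

lemma finite_PA: "finite (PA n)"
proof -
  have "PA n \<subseteq> (\<lambda>(i,j). Mi i j) ` ({1..n} \<times> {1..n})" unfolding PA_def by force
  then show ?thesis by (rule finite_subset) simp
qed

lemma finite_PC: "finite (PC n)"
proof -
  have "PC n \<subseteq> (\<lambda>(i,j). Mi i j) ` ({1..n} \<times> {1..n}) \<union> (\<lambda>(i,j). Pl i j) ` ({1..n} \<times> {1..n})
     \<union> Si ` {1..n}" unfolding PC_def by force
  then show ?thesis by (rule finite_subset) simp
qed

fun fsw :: "nat \<Rightarrow> root \<Rightarrow> root" where
  "fsw k (Mi i j) = Mi (tr k i) (tr k j)"
| "fsw k (Pl i j) = Pl (min (tr k i) (tr k j)) (max (tr k i) (tr k j))"
| "fsw k (Si i) = Si (tr k i)"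

fun fng :: "nat \<Rightarrow> root \<Rightarrow> root" where
  "fng n (Mi i j) = (if j = n then Pl i j else Mi i j)"
| "fng n (Pl i j) = (if j = n then Mi i j else Pl i j)"
| "fng n (Si i) = Si i"

lemma sw_sw: "sw k \<circ> sw k = id" by (auto simp: fun_eq_iff sw_def tr_tr)
lemma ng_ng: "ng n \<circ> ng n = id" by (auto simp: fun_eq_iff ng_def)

lemma formula_A:
  assumes "1 \<le> k" "k < n"
  shows "NP (PA n) (sw k x) + (if rv (Mi k (k+1)) x < 0 then 1 else 0)
       = NP (PA n) x + (if rv (Mi k (k+1)) x > 0 then 1 else 0)"
proof (rule count_formula[where f = "fsw k"])
  show "finite (PA n)" by (rule finite_PA)
  show "Mi k (k+1) \<in> PA n" using assms unfolding PA_def by auto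
  show "\<forall>\<beta>\<in>PA n - {Mi k (k + 1)}. fsw k \<beta> \<in> PA n - {Mi k (k + 1)}"
    using assms unfolding PA_def by (auto simp: tr_def split: if_splits)
  show "\<forall>\<beta>\<in>PA n - {Mi k (k + 1)}. fsw k (fsw k \<beta>) = \<beta>"
    unfolding PA_def by (auto simp: tr_tr)
  show "\<forall>\<beta>\<in>PA n - {Mi k (k + 1)}. rv \<beta> (sw k x) = rv (fsw k \<beta>) x"
    unfolding PA_def by (auto simp: sw_def)
  show "rv (Mi k (k + 1)) (sw k x) = - rv (Mi k (k + 1)) x"
    by (simp add: sw_def tr_def)
qed

lemma formula_Csw:
  assumes "1 \<le> k" "k < n"
  shows "NP (PC n) (sw k x) + (if rv (Mi k (k+1)) x < 0 then 1 else 0)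
       = NP (PC n) x + (if rv (Mi k (k+1)) x > 0 then 1 else 0)"
proof (rule count_formula[where f = "fsw k"])
  show "finite (PC n)" by (rule finite_PC)
  show "Mi k (k+1) \<in> PC n" using assms unfolding PC_def by auto
  show "\<forall>\<beta>\<in>PC n - {Mi k (k + 1)}. fsw k \<beta> \<in> PC n - {Mi k (k + 1)}"
    using assms unfolding PC_def by (auto simp: tr_def min_def max_def split: if_splits)
  show "\<forall>\<beta>\<in>PC n - {Mi k (k + 1)}. fsw k (fsw k \<beta>) = \<beta>"
    unfolding PC_def by (auto simp: tr_def min_def max_def split: if_splits)
  show "\<forall>\<beta>\<in>PC n - {Mi k (k + 1)}. rv \<beta> (sw k x) = rv (fsw k \<beta>) x"
    unfolding PC_def by (auto simp: sw_def min_def max_def split: if_splits)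
  show "rv (Mi k (k + 1)) (sw k x) = - rv (Mi k (k + 1)) x"
    by (simp add: sw_def tr_def)
qed

lemma formula_Cng:
  assumes "1 \<le> n"
  shows "NP (PC n) (ng n x) + (if rv (Si n) x < 0 then 1 else 0)
       = NP (PC n) x + (if rv (Si n) x > 0 then 1 else 0)"
proof (rule count_formula[where f = "fng n"])
  show "finite (PC n)" by (rule finite_PC)
  show "Si n \<in> PC n" using assms unfolding PC_def by auto
  show "\<forall>\<beta>\<in>PC n - {Si n}. fng n \<beta> \<in> PC n - {Si n}"
    using assms unfolding PC_def by (auto split: if_splits)
  show "\<forall>\<beta>\<in>PC n - {Si n}. fng n (fng n \<beta>) = \<beta>"
    unfolding PC_def by (auto split: if_splits)
  show "\<forall>\<beta>\<in>PC n - {Si n}. rv \<beta> (ng n x) = rv (fng n \<beta>) x"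
    unfolding PC_def by (auto simp: ng_def split: if_splits)
  show "rv (Si n) (ng n x) = - rv (Si n) x"
    by (simp add: ng_def)
qed



lemma chain:
  fixes f :: "nat \<Rightarrow> real"
  assumes "\<forall>k. 1 \<le> k \<longrightarrow> k < n \<longrightarrow> f (k+1) \<le> f k" "1 \<le> i" "i \<le> j" "j \<le> n"
  shows "f j \<le> f i"
  using assms(3,4)
proof (induction j rule: dec_induct)
  case base then show ?case by simp
next
  case (step m)
  then have "f (m+1) \<le> f m" using assms(1,2) by auto
  then show ?case using step by simp
qed

lemma incr_shift:
  fixes \<pi> :: "nat \<Rightarrow> nat"
  assumes "\<forall>k. 1 \<le> k \<longrightarrow> k < n \<longrightarrow> \<pi> k < \<pi> (k+1)" "1 \<le> i" "i \<le> j" "j \<le> n"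
  shows "\<pi> i + (j - i) \<le> \<pi> j"
  using assms(3,4)
proof (induction j rule: dec_induct)
  case base then show ?case by simp
next
  case (step m)
  then have "\<pi> m < \<pi> (m+1)" using assms(1,2) by auto
  then show ?case using step by simp
qed

lemma incr_id:
  fixes \<pi> :: "nat \<Rightarrow> nat"
  assumes "\<forall>j\<in>{1..n}. \<pi> j \<in> {1..n}" "\<forall>k. 1 \<le> k \<longrightarrow> k < n \<longrightarrow> \<pi> k < \<pi> (k+1)" "j \<in> {1..n}"
  shows "\<pi> j = j"
proof -
  have "\<pi> 1 + (j - 1) \<le> \<pi> j" using incr_shift[OF assms(2), of 1 j] assms(3) by auto
  moreover have "\<pi> 1 \<ge> 1" using assms(1,3) by auto
  moreover have "\<pi> j + (n - j) \<le> \<pi> n" using incr_shift[OF assms(2), of j n] assms(3) by auto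
  moreover have "\<pi> n \<le> n" using assms(1,3) by auto
  ultimately show ?thesis using assms(3) by auto
qed

lemma decr_rev:
  fixes \<pi> :: "nat \<Rightarrow> nat"
  assumes "\<forall>j\<in>{1..n}. \<pi> j \<in> {1..n}" "\<forall>k. 1 \<le> k \<longrightarrow> k < n \<longrightarrow> \<pi> (k+1) < \<pi> k" "j \<in> {1..n}"
  shows "\<pi> j = n + 1 - j"
proof -
  have "(\<lambda>j. n + 1 - \<pi> j) j = j"
  proof (rule incr_id[where n = n])
    show "\<forall>j\<in>{1..n}. n + 1 - \<pi> j \<in> {1..n}" using assms(1) by fastforce
    show "\<forall>k. 1 \<le> k \<longrightarrow> k < n \<longrightarrow> n + 1 - \<pi> k < n + 1 - \<pi> (k + 1)"
    proof (intro allI impI)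
      fix k assume k: "1 \<le> k" "k < n"
      then have "\<pi> (k+1) < \<pi> k" "\<pi> k \<le> n" using assms(1,2) by auto
      then show "n + 1 - \<pi> k < n + 1 - \<pi> (k + 1)" by linarith
    qed
    show "j \<in> {1..n}" by fact
  qed
  then show ?thesis using assms(1,3) by fastforce
qed

locale vdat =
  fixes n :: nat and v :: vec0
  assumes vpos: "\<forall>j\<in>{1..n}. 0 < v j"
    and vdec: "\<forall>i j. 1 \<le> i \<longrightarrow> i < j \<longrightarrow> j \<le> n \<longrightarrow> v j < v i"
    and vout: "\<forall>j. j \<notin> {1..n} \<longrightarrow> v j = 0"
begin

lemma vinj: "a \<in> {1..n} \<Longrightarrow> b \<in> {1..n} \<Longrightarrow> v a = v b \<Longrightarrow> a = b"
proof (rule ccontr)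
  assume a: "a \<in> {1..n}" "b \<in> {1..n}" "v a = v b" "a \<noteq> b"
  show False
  proof (cases "a < b")
    case True then show False using vdec a by force
  next
    case False then have "b < a" using a(4) by simp
    then show False using vdec a by force
  qed
qed

lemma vord:
  assumes "\<forall>j\<in>{1..n}. \<pi> j \<in> {1..n}" "inj_on \<pi> {1..n}" "a \<in> {1..n}" "b \<in> {1..n}" "a \<noteq> b"
    "v (\<pi> b) \<le> v (\<pi> a)"
  shows "\<pi> a < \<pi> b"
proof -
  have "\<pi> a \<noteq> \<pi> b" using assms(2-5) by (meson inj_on_contraD)
  moreover have "\<not> \<pi> b < \<pi> a"
  proof
    assume "\<pi> b < \<pi> a"
    then have "v (\<pi> a) < v (\<pi> b)" using vdec assms(1,3,4) by auto
    then show False using assms(6) by simp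
  qed
  ultimately show ?thesis by simp
qed

end



context vdat begin

lemma sp_unique:
  assumes "sp n I w1" "sp n I w2" "w1 v = w2 v"
  shows "w1 = w2"
proof -
  obtain \<pi>1 and \<epsilon>1 :: "nat \<Rightarrow> real" where
    p1: "\<forall>j\<in>{1..n}. \<pi>1 j \<in> {1..n}" and p3: "\<forall>j. \<epsilon>1 j = 1 \<or> \<epsilon>1 j = -1" and
    p5: "w1 = (\<lambda>x j. if j \<in> {1..n} then \<epsilon>1 j * x (\<pi>1 j) else x j)"
    using assms(1) unfolding sp_def by auto
  obtain \<pi>2 and \<epsilon>2 :: "nat \<Rightarrow> real" where
    q1: "\<forall>j\<in>{1..n}. \<pi>2 j \<in> {1..n}" and q3: "\<forall>j. \<epsilon>2 j = 1 \<or> \<epsilon>2 j = -1" and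
    q5: "w2 = (\<lambda>x j. if j \<in> {1..n} then \<epsilon>2 j * x (\<pi>2 j) else x j)"
    using assms(2) unfolding sp_def by auto
  have E: "\<epsilon>1 j = \<epsilon>2 j \<and> \<pi>1 j = \<pi>2 j" if j: "j \<in> {1..n}" for j
  proof -
    have eq: "\<epsilon>1 j * v (\<pi>1 j) = \<epsilon>2 j * v (\<pi>2 j)"
      using fun_cong[OF assms(3), of j] j unfolding p5 q5 by simp
    have pos: "v (\<pi>1 j) > 0" "v (\<pi>2 j) > 0" using vpos p1 q1 j by auto
    have e: "\<epsilon>1 j = \<epsilon>2 j"
      using p3[rule_format, of j] q3[rule_format, of j] eq pos by auto
    then have "v (\<pi>1 j) = v (\<pi>2 j)" using eq p3[rule_format, of j] by auto
    then have "\<pi>1 j = \<pi>2 j" using vinj p1 q1 j by blast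
    with e show ?thesis by simp
  qed
  show ?thesis unfolding p5 q5 using E by (auto simp: fun_eq_iff)
qed

lemma sp_id: "sp n I id"
  unfolding sp_def
  by (rule exI[of _ id], rule exI[of _ "\<lambda>_. 1"]) (auto simp: fun_eq_iff)

lemma sp_unique_id: "sp n I w \<Longrightarrow> w v = v \<Longrightarrow> w = id"
  using sp_unique[of I w id] sp_id by simp

lemma NP_v_C: "NP (PC n) v = 0"
proof -
  have "\<forall>\<beta>\<in>PC n. rv \<beta> v > 0"
  proof
    fix \<beta> assume "\<beta> \<in> PC n"
    then consider (m) i j where "\<beta> = Mi i j" "1 \<le> i" "i < j" "j \<le> n"
      | (p) i j where "\<beta> = Pl i j" "1 \<le> i" "i < j" "j \<le> n"
      | (s) i where "\<beta> = Si i" "1 \<le> i" "i \<le> n"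
      unfolding PC_def by blast
    then show "rv \<beta> v > 0"
    proof cases
      case m then show ?thesis using vdec by simp
    next
      case p then have "v i > 0" "v j > 0" using vpos by auto
      then show ?thesis using p by simp
    next
      case s then show ?thesis using vpos by simp
    qed
  qed
  then have e: "{\<beta>\<in>PC n. rv \<beta> v < 0} = {}" by fastforce
  show ?thesis unfolding NP_def e by simp
qed

lemma NP_v_A: "NP (PA n) v = 0"
proof -
  have "\<forall>\<beta>\<in>PA n. rv \<beta> v > 0"
  proof
    fix \<beta> assume "\<beta> \<in> PA n"
    then obtain i j where "\<beta> = Mi i j" "1 \<le> i" "i < j" "j \<le> n"
      unfolding PA_def by blast
    then show "rv \<beta> v > 0" using vdec by simp
  qed
  then have e: "{\<beta>\<in>PA n. rv \<beta> v < 0} = {}" by fastforce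
  show ?thesis unfolding NP_def e by simp
qed

definition aC :: "nat \<Rightarrow> root" where "aC k = (if k < n then Mi k (k+1) else Si n)"

lemma h4C:
  assumes sp: "sp n {1..n} w" and dom: "\<forall>k\<in>{1..n}. rv (aC k) (w v) \<ge> 0" and n1: "1 \<le> n"
  shows "w = id"
proof -
  obtain \<pi> and \<epsilon> :: "nat \<Rightarrow> real" where
    p1: "\<forall>j\<in>{1..n}. \<pi> j \<in> {1..n}" and p2: "inj_on \<pi> {1..n}" and p3: "\<forall>j. \<epsilon> j = 1 \<or> \<epsilon> j = -1" and
    p5: "w = (\<lambda>x j. if j \<in> {1..n} then \<epsilon> j * x (\<pi> j) else x j)"
    using sp unfolding sp_def by auto
  define y where "y = w v"
  have y: "y j = \<epsilon> j * v (\<pi> j)" if "j \<in> {1..n}" for j using that unfolding y_def p5 by simp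
  have "n \<in> {1..n}" using n1 by auto
  then have "rv (aC n) (w v) \<ge> 0" using dom by blast
  then have yn: "y n \<ge> 0" unfolding y_def aC_def by simp
  have yk: "\<forall>k. 1 \<le> k \<longrightarrow> k < n \<longrightarrow> y (k+1) \<le> y k"
  proof (intro allI impI)
    fix k assume k: "1 \<le> k" "k < n"
    then have "k \<in> {1..n}" "aC k = Mi k (k+1)" by (auto simp: aC_def)
    then show "y (k+1) \<le> y k" using dom unfolding y_def by fastforce
  qed
  have eps: "\<epsilon> j = 1" if j: "j \<in> {1..n}" for j
  proof (rule ccontr)
    assume "\<epsilon> j \<noteq> 1"
    then have "\<epsilon> j = -1" using p3 by blast
    then have "y j < 0" using y[OF j] vpos p1 j by auto
    moreover have "y n \<le> y j" using chain[OF yk, of j n] j by auto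
    ultimately show False using yn by simp
  qed
  have "\<forall>k. 1 \<le> k \<longrightarrow> k < n \<longrightarrow> \<pi> k < \<pi> (k+1)"
  proof (intro allI impI)
    fix k assume k: "1 \<le> k" "k < n"
    have "v (\<pi> (k+1)) \<le> v (\<pi> k)" using yk k y[of k] y[of "k+1"] eps[of k] eps[of "k+1"] by auto
    then show "\<pi> k < \<pi> (k+1)" using vord[OF p1 p2, of k "k+1"] k by auto
  qed
  then have "\<pi> j = j" if "j \<in> {1..n}" for j using incr_id[OF p1] that by blast
  then show ?thesis unfolding p5 using eps by (auto simp: fun_eq_iff)
qed

lemma h5C:
  assumes sp: "sp n {1..n} w" and dom: "\<forall>k\<in>{1..n}. rv (aC k) (w v) \<le> 0" and n1: "1 \<le> n"
  shows "w v = (\<lambda>j. - v j)"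
proof -
  obtain \<pi> and \<epsilon> :: "nat \<Rightarrow> real" where
    p1: "\<forall>j\<in>{1..n}. \<pi> j \<in> {1..n}" and p2: "inj_on \<pi> {1..n}" and p3: "\<forall>j. \<epsilon> j = 1 \<or> \<epsilon> j = -1" and
    p5: "w = (\<lambda>x j. if j \<in> {1..n} then \<epsilon> j * x (\<pi> j) else x j)"
    using sp unfolding sp_def by auto
  define y where "y = w v"
  have y: "y j = \<epsilon> j * v (\<pi> j)" if "j \<in> {1..n}" for j using that unfolding y_def p5 by simp
  have "n \<in> {1..n}" using n1 by auto
  then have "rv (aC n) (w v) \<le> 0" using dom by blast
  then have yn: "y n \<le> 0" unfolding y_def aC_def by simp
  have yk: "\<forall>k. 1 \<le> k \<longrightarrow> k < n \<longrightarrow> (\<lambda>j. - y j) (k+1) \<le> (\<lambda>j. - y j) k"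
  proof (intro allI impI)
    fix k assume k: "1 \<le> k" "k < n"
    then have "k \<in> {1..n}" "aC k = Mi k (k+1)" by (auto simp: aC_def)
    then show "(\<lambda>j. - y j) (k+1) \<le> (\<lambda>j. - y j) k" using dom unfolding y_def by fastforce
  qed
  have eps: "\<epsilon> j = -1" if j: "j \<in> {1..n}" for j
  proof (rule ccontr)
    assume "\<epsilon> j \<noteq> -1"
    then have "\<epsilon> j = 1" using p3 by blast
    then have "y j > 0" using y[OF j] vpos p1 j by auto
    moreover have "- y n \<le> - y j" using chain[OF yk, of j n] j by auto
    ultimately show False using yn by simp
  qed
  have "\<forall>k. 1 \<le> k \<longrightarrow> k < n \<longrightarrow> \<pi> k < \<pi> (k+1)"
  proof (intro allI impI)
    fix k assume k: "1 \<le> k" "k < n"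
    have "v (\<pi> (k+1)) \<le> v (\<pi> k)" using yk k y[of k] y[of "k+1"] eps[of k] eps[of "k+1"] by auto
    then show "\<pi> k < \<pi> (k+1)" using vord[OF p1 p2, of k "k+1"] k by auto
  qed
  then have "\<pi> j = j" if "j \<in> {1..n}" for j using incr_id[OF p1] that by blast
  then show ?thesis unfolding p5 using eps vout by (auto simp: fun_eq_iff)
qed

lemma h4A:
  assumes sp: "sp n {1..n-1} w" and dom: "\<forall>k\<in>{1..n-1}. rv (Mi k (k+1)) (w v) \<ge> 0" and n1: "1 \<le> n"
  shows "w = id"
proof -
  obtain \<pi> and \<epsilon> :: "nat \<Rightarrow> real" where
    p1: "\<forall>j\<in>{1..n}. \<pi> j \<in> {1..n}" and p2: "inj_on \<pi> {1..n}" and p4: "n \<notin> {1..n-1} \<longrightarrow> (\<forall>j. \<epsilon> j = 1)" and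
    p5: "w = (\<lambda>x j. if j \<in> {1..n} then \<epsilon> j * x (\<pi> j) else x j)"
    using sp unfolding sp_def by auto
  have eps: "\<epsilon> j = 1" for j using p4 n1 by auto
  define y where "y = w v"
  have y: "y j = v (\<pi> j)" if "j \<in> {1..n}" for j using that eps unfolding y_def p5 by simp
  have yk: "\<forall>k. 1 \<le> k \<longrightarrow> k < n \<longrightarrow> y (k+1) \<le> y k"
  proof (intro allI impI)
    fix k assume k: "1 \<le> k" "k < n"
    then have "k \<in> {1..n-1}" by auto
    then show "y (k+1) \<le> y k" using dom unfolding y_def by fastforce
  qed
  have "\<forall>k. 1 \<le> k \<longrightarrow> k < n \<longrightarrow> \<pi> k < \<pi> (k+1)"
  proof (intro allI impI)
    fix k assume k: "1 \<le> k" "k < n"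
    have "v (\<pi> (k+1)) \<le> v (\<pi> k)" using yk k y[of k] y[of "k+1"] by auto
    then show "\<pi> k < \<pi> (k+1)" using vord[OF p1 p2, of k "k+1"] k by auto
  qed
  then have "\<pi> j = j" if "j \<in> {1..n}" for j using incr_id[OF p1] that by blast
  then show ?thesis unfolding p5 using eps by (auto simp: fun_eq_iff)
qed

definition tA :: vec0 where "tA = (\<lambda>j. if j \<in> {1..n} then v (n + 1 - j) else v j)"

lemma h5A:
  assumes sp: "sp n {1..n-1} w" and dom: "\<forall>k\<in>{1..n-1}. rv (Mi k (k+1)) (w v) \<le> 0" and n1: "1 \<le> n"
  shows "w v = tA"
proof -
  obtain \<pi> and \<epsilon> :: "nat \<Rightarrow> real" where
    p1: "\<forall>j\<in>{1..n}. \<pi> j \<in> {1..n}" and p2: "inj_on \<pi> {1..n}" and p4: "n \<notin> {1..n-1} \<longrightarrow> (\<forall>j. \<epsilon> j = 1)" and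
    p5: "w = (\<lambda>x j. if j \<in> {1..n} then \<epsilon> j * x (\<pi> j) else x j)"
    using sp unfolding sp_def by auto
  have eps: "\<epsilon> j = 1" for j using p4 n1 by auto
  define y where "y = w v"
  have y: "y j = v (\<pi> j)" if "j \<in> {1..n}" for j using that eps unfolding y_def p5 by simp
  have yk: "\<forall>k. 1 \<le> k \<longrightarrow> k < n \<longrightarrow> y k \<le> y (k+1)"
  proof (intro allI impI)
    fix k assume k: "1 \<le> k" "k < n"
    then have "k \<in> {1..n-1}" by auto
    then show "y k \<le> y (k+1)" using dom unfolding y_def by fastforce
  qed
  have "\<forall>k. 1 \<le> k \<longrightarrow> k < n \<longrightarrow> \<pi> (k+1) < \<pi> k"
  proof (intro allI impI)
    fix k assume k: "1 \<le> k" "k < n"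
    have "v (\<pi> k) \<le> v (\<pi> (k+1))" using yk k y[of k] y[of "k+1"] by auto
    then show "\<pi> (k+1) < \<pi> k" using vord[OF p1 p2, of "k+1" k] k by auto
  qed
  then have "\<pi> j = n + 1 - j" if "j \<in> {1..n}" for j using decr_rev[OF p1] that by blast
  then show ?thesis unfolding p5 tA_def using eps by (auto simp: fun_eq_iff)
qed

end



lemma gen_sp: "1 \<le> n \<Longrightarrow> I \<subseteq> {1..n} \<Longrightarrow> w \<in> gen n I \<Longrightarrow> sp n I w"
  unfolding gen_iff using sp_wordprod by blast

context vdat begin

lemma w0_char:
  assumes n1: "1 \<le> n"
  shows "w0 n \<in> W0 n \<and> w0 n v = (\<lambda>j. - v j)"
  unfolding w0_def W0_def
proof (rule longest_char[where P = "PC n" and a = aC])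
  show "finite (PC n)" by (rule finite_PC)
  show "\<forall>k\<in>{1..n}. aC k \<in> PC n" unfolding aC_def PC_def by auto
  show "\<forall>k\<in>{1..n}. \<forall>x. NP (PC n) (srefl n k x) + (if rv (aC k) x < 0 then 1 else 0) =
       NP (PC n) x + (if 0 < rv (aC k) x then 1 else 0)"
  proof (intro ballI allI)
    fix k x assume k: "k \<in> {1..n}"
    show "NP (PC n) (srefl n k x) + (if rv (aC k) x < 0 then 1 else 0) =
       NP (PC n) x + (if 0 < rv (aC k) x then 1 else 0)"
    proof (cases "k < n")
      case True
      then have "srefl n k = sw k" "aC k = Mi k (k+1)" using k srefl_sw by (auto simp: aC_def)
      then show ?thesis using formula_Csw[of k n x] k True by simp
    next
      case False
      then have "k = n" using k by auto
      then have "srefl n k = ng n" "aC k = Si n" using n1 srefl_ng by (auto simp: aC_def)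
      then show ?thesis using formula_Cng[OF n1, of x] by simp
    qed
  qed
  show "NP (PC n) v = 0" by (rule NP_v_C)
  show "\<forall>w\<in>gen n {1..n}. (\<forall>k\<in>{1..n}. 0 \<le> rv (aC k) (w v)) \<longrightarrow> w = id"
    using h4C gen_sp[OF n1] n1 by blast
  show "\<forall>w\<in>gen n {1..n}. (\<forall>k\<in>{1..n}. rv (aC k) (w v) \<le> 0) \<longrightarrow> w v = (\<lambda>j. - v j)"
    using h5C gen_sp[OF n1] n1 by blast
  show "\<forall>w1\<in>gen n {1..n}. \<forall>w2\<in>gen n {1..n}. w1 v = w2 v \<longrightarrow> w1 = w2"
    using sp_unique gen_sp[OF n1] by blast
  show "\<forall>k\<in>{1..n}. srefl n k \<circ> srefl n k = id"
  proof
    fix k assume k: "k \<in> {1..n}"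
    show "srefl n k \<circ> srefl n k = id"
    proof (cases "k < n")
      case True then show ?thesis using k srefl_sw sw_sw by auto
    next
      case False then have "k = n" using k by auto
      then show ?thesis using srefl_ng ng_ng n1 by auto
    qed
  qed
qed

lemma w0n_char:
  assumes n1: "1 \<le> n"
  shows "w0n n \<in> gen n {1..n-1} \<and> w0n n v = tA"
  unfolding w0n_def
proof (rule longest_char[where P = "PA n" and a = "\<lambda>k. Mi k (k+1)"])
  have I: "{1..n-1} \<subseteq> {1..n}" by auto
  show "finite (PA n)" by (rule finite_PA)
  show "\<forall>k\<in>{1..n-1}. Mi k (k+1) \<in> PA n" unfolding PA_def by auto
  show "\<forall>k\<in>{1..n-1}. \<forall>x. NP (PA n) (srefl n k x) + (if rv (Mi k (k+1)) x < 0 then 1 else 0) =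
       NP (PA n) x + (if 0 < rv (Mi k (k+1)) x then 1 else 0)"
  proof (intro ballI allI)
    fix k x assume k: "k \<in> {1..n-1}"
    then have "srefl n k = sw k" using srefl_sw by auto
    then show "NP (PA n) (srefl n k x) + (if rv (Mi k (k+1)) x < 0 then 1 else 0) =
       NP (PA n) x + (if 0 < rv (Mi k (k+1)) x then 1 else 0)" using formula_A[of k n x] k by auto
  qed
  show "NP (PA n) v = 0" by (rule NP_v_A)
  show "\<forall>w\<in>gen n {1..n-1}. (\<forall>k\<in>{1..n-1}. 0 \<le> rv (Mi k (k+1)) (w v)) \<longrightarrow> w = id"
    using h4A gen_sp[OF n1 I] n1 by blast
  show "\<forall>w\<in>gen n {1..n-1}. (\<forall>k\<in>{1..n-1}. rv (Mi k (k+1)) (w v) \<le> 0) \<longrightarrow> w v = tA"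
    using h5A gen_sp[OF n1 I] n1 by blast
  show "\<forall>w1\<in>gen n {1..n-1}. \<forall>w2\<in>gen n {1..n-1}. w1 v = w2 v \<longrightarrow> w1 = w2"
    using sp_unique gen_sp[OF n1 I] by blast
  show "\<forall>k\<in>{1..n-1}. srefl n k \<circ> srefl n k = id"
    using srefl_sw sw_sw by auto
qed

end



lemma sp_form: assumes "sp n I u"
  obtains \<pi> and \<epsilon> :: "nat \<Rightarrow> real" where "u = (\<lambda>x j. if j \<in> {1..n} then \<epsilon> j * x (\<pi> j) else x j)"
  using assms unfolding sp_def by blast

lemma sp_zero: assumes "sp n I u" shows "u (\<lambda>_. 0) = (\<lambda>_. 0)"
  using assms by (rule sp_form) (simp add: fun_eq_iff)

lemma sp_neg: assumes "sp n I u" shows "u (\<lambda>j. - x j) = (\<lambda>j. - u x j)"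
  using assms by (rule sp_form) (simp add: fun_eq_iff)

lemma sp_supp: assumes "sp n I u" "\<forall>j. j \<notin> {1..n} \<longrightarrow> x j = 0" shows "\<forall>j. j \<notin> {1..n} \<longrightarrow> u x j = 0"
  using assms(1) by (rule sp_form) (use assms(2) in simp)

lemma sp_dot: assumes "sp n I u" shows "dot n (u x) (u y) = dot n x y"
proof -
  obtain \<pi> and \<epsilon> :: "nat \<Rightarrow> real" where
    p1: "\<forall>j\<in>{1..n}. \<pi> j \<in> {1..n}" and p2: "inj_on \<pi> {1..n}" and p3: "\<forall>j. \<epsilon> j = 1 \<or> \<epsilon> j = -1" and
    p5: "u = (\<lambda>x j. if j \<in> {1..n} then \<epsilon> j * x (\<pi> j) else x j)"
    using assms unfolding sp_def by auto
  have im: "\<pi> ` {1..n} = {1..n}" using p1 p2 by (intro endo_inj_surj) auto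
  have "dot n (u x) (u y) = (\<Sum>j=1..n. x (\<pi> j) * y (\<pi> j))"
    unfolding dot_def p5
  proof (rule sum.cong)
    fix j assume "j \<in> {1..n}"
    moreover have "\<epsilon> j * \<epsilon> j = 1" using p3[rule_format, of j] by auto
    ultimately show "(if j \<in> {1..n} then \<epsilon> j * x (\<pi> j) else x j) * (if j \<in> {1..n} then \<epsilon> j * y (\<pi> j) else y j)
       = x (\<pi> j) * y (\<pi> j)"
      by (simp add: algebra_simps)
  qed simp
  also have "\<dots> = (\<Sum>i\<in>\<pi> ` {1..n}. x i * y i)"
    using sum.reindex[OF p2, of "\<lambda>i. x i * y i"] by simp
  also have "\<dots> = dot n x y" unfolding dot_def im ..
  finally show ?thesis .
qed

definition rr :: "nat \<Rightarrow> vec0" where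
  "rr n = (\<lambda>j. if j \<in> {1..n} then (2 * real n - 2 * real j + 1) / sqrt 2 else 0)"

lemma vdat_rr: "vdat n (rr n)"
proof
  show "\<forall>j\<in>{1..n}. 0 < rr n j" unfolding rr_def by auto
  show "\<forall>i j. 1 \<le> i \<longrightarrow> i < j \<longrightarrow> j \<le> n \<longrightarrow> rr n j < rr n i"
    unfolding rr_def by (auto simp: divide_strict_right_mono)
  show "\<forall>j. j \<notin> {1..n} \<longrightarrow> rr n j = 0" unfolding rr_def by auto
qed

lemma sum_real_id: "(\<Sum>j=1..m. real j) = real m * (real m + 1) / 2"
  by (induction m) (auto simp: field_simps)



locale rlin =
  fixes n :: nat and rho :: "hstar \<Rightarrow> real"
  assumes radd: "\<forall>u v. rho (hadd u v) = rho u + rho v"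
    and rscl: "\<forall>t u. rho (hscale t u) = t * rho u"
    and rroot: "\<forall>i \<in> {0..n}. rho (aroot n i) = 1"
    and n2: "n \<ge> 2"
begin

lemma R_add: "rho (vadd x y, 0, 0) = rho (x, 0, 0) + rho (y, 0, 0)"
proof -
  have e: "hadd (x, 0, 0) (y, 0, 0) = (vadd x y, 0, 0)" by (simp add: hadd_def)
  show ?thesis using radd[rule_format, of "(x, 0, 0)" "(y, 0, 0)"] unfolding e .
qed

lemma R_scale: "rho (vscale c x, 0, 0) = c * rho (x, 0, 0)"
proof -
  have e: "hscale c (x, 0, 0) = (vscale c x, 0, 0)" by (simp add: hscale_def)
  show ?thesis using rscl[rule_format, of c "(x, 0, 0)"] unfolding e .
qed

lemma R_zero: "rho ((\<lambda>_. 0), 0, 0) = 0"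
proof -
  have "(\<lambda>_. 0::real) = vscale 0 (\<lambda>_. 0)" by (simp add: vscale_def)
  then show ?thesis using R_scale[of 0 "\<lambda>_. 0"] by simp
qed

lemma R_xc: "rho (x, 0, c) = rho (x, 0, 0) + c * rho delta"
proof -
  have e1: "hscale c delta = ((\<lambda>_. 0), 0, c)" by (simp add: hscale_def delta_def vscale_def)
  have e2: "hadd (x, 0, 0) ((\<lambda>_. 0), 0, c) = (x, 0, c)" by (simp add: hadd_def vadd_def)
  have "rho (hadd (x, 0, 0) (hscale c delta)) = rho (x, 0, 0) + c * rho delta"
    using radd[rule_format, of "(x, 0, 0)" "hscale c delta"] rscl[rule_format, of c delta] by simp
  then show ?thesis unfolding e1 e2 .
qed

lemma R_neg: "rho ((\<lambda>j. - x j), 0, 0) = - rho (x, 0, 0)"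
proof -
  have "(\<lambda>j. - x j) = vscale (-1) x" by (simp add: vscale_def fun_eq_iff)
  then show ?thesis using R_scale[of "-1" x] by simp
qed

lemma R_sum: "rho ((\<lambda>j. \<Sum>k=1..(m::nat). f k j), 0, 0) = (\<Sum>k=1..m. rho (f k, 0, 0))"
proof (induction m)
  case 0 then show ?case using R_zero by simp
next
  case (Suc m)
  have "(\<lambda>j. \<Sum>k=1..Suc m. f k j) = vadd (\<lambda>j. \<Sum>k=1..m. f k j) (f (Suc m))"
    by (simp add: vadd_def fun_eq_iff)
  then show ?case using R_add Suc by simp
qed

lemma R_froot: "k \<in> {1..n} \<Longrightarrow> rho (froot n k, 0, 0) = 1"
proof -
  assume k: "k \<in> {1..n}"
  then have "rho (aroot n k) = 1" using rroot by auto
  moreover have "aroot n k = (froot n k, 0, 0)" using k by (simp add: aroot_def)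
  ultimately show ?thesis by simp
qed

lemma R_eps_step: assumes "1 \<le> k" "k < n"
  shows "rho (eps k, 0, 0) = rho (eps (k+1), 0, 0) + sqrt 2"
proof -
  have "froot n k = vscale (1 / sqrt 2) (vadd (eps k) (vscale (-1) (eps (k+1))))"
    using assms by (simp add: froot_def vsub_def vadd_def vscale_def)
  then have "rho (froot n k, 0, 0) = (1 / sqrt 2) * (rho (eps k, 0, 0) - rho (eps (k+1), 0, 0))"
    using R_scale R_add by simp
  moreover have "rho (froot n k, 0, 0) = 1" using R_froot assms by simp
  ultimately have "(1 / sqrt 2) * (rho (eps k, 0, 0) - rho (eps (k+1), 0, 0)) = 1" by metis
  then have "rho (eps k, 0, 0) - rho (eps (k+1), 0, 0) = sqrt 2" by (simp add: field_simps)
  then show ?thesis by simp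
qed

lemma R_eps_n: "rho (eps n, 0, 0) = 1 / sqrt 2"
proof -
  have "froot n n = vscale (sqrt 2) (eps n)" by (simp add: froot_def)
  then have "rho (froot n n, 0, 0) = sqrt 2 * rho (eps n, 0, 0)" using R_scale by simp
  moreover have "rho (froot n n, 0, 0) = 1" using R_froot n2 by simp
  ultimately have "sqrt 2 * rho (eps n, 0, 0) = 1" by simp
  then show ?thesis by (simp add: field_simps)
qed

lemma R_eps_d: "d < n \<Longrightarrow> rho (eps (n - d), 0, 0) = (2 * real d + 1) / sqrt 2"
proof (induction d)
  case 0 then show ?case using R_eps_n by simp
next
  case (Suc d)
  have "rho (eps (n - Suc d), 0, 0) = rho (eps (n - Suc d + 1), 0, 0) + sqrt 2"
    using Suc.prems by (intro R_eps_step) auto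
  also have "n - Suc d + 1 = n - d" using Suc.prems by simp
  also have "rho (eps (n - d), 0, 0) + sqrt 2 = (2 * real d + 1) / sqrt 2 + 2 / sqrt 2"
    using Suc by (simp add: real_div_sqrt)
  finally show ?case by (simp add: field_simps)
qed

lemma R_eps: "j \<in> {1..n} \<Longrightarrow> rho (eps j, 0, 0) = rr n j"
  using R_eps_d[of "n - j"] by (auto simp: rr_def of_nat_diff)

lemma R_dot: assumes "\<forall>j. j \<notin> {1..n} \<longrightarrow> x j = 0"
  shows "rho (x, 0, 0) = dot n x (rr n)"
proof -
  have xeq: "(\<lambda>j. \<Sum>k=1..n. vscale (x k) (eps k) j) = x"
  proof
    fix j
    have "(\<Sum>k=1..n. vscale (x k) (eps k) j) = (\<Sum>k=1..n. if k = j then x j else 0)"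
      by (intro sum.cong) (auto simp: vscale_def eps_def)
    also have "\<dots> = x j" using assms by (auto simp: sum.delta)
    finally show "(\<Sum>k=1..n. vscale (x k) (eps k) j) = x j" .
  qed
  have "rho (x, 0, 0) = (\<Sum>k=1..n. rho (vscale (x k) (eps k), 0, 0))"
    using R_sum[where m = n and f = "\<lambda>k. vscale (x k) (eps k)"] unfolding xeq .
  also have "\<dots> = (\<Sum>k=1..n. x k * rr n k)"
    using R_scale R_eps by (intro sum.cong) auto
  finally show ?thesis unfolding dot_def .
qed

lemma rho_delta: "rho delta = 2 * real n"
proof -
  define X where "X = (\<lambda>j. \<Sum>k=1..n. vscale (marks n k) (froot n k) j)"
  have a0: "aroot n 0 = ((\<lambda>j. - X j), 0, 1)"
    by (simp add: aroot_def vscale_def X_def)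
  have "rho (aroot n 0) = 1" using rroot by auto
  moreover have "rho (aroot n 0) = - rho (X, 0, 0) + rho delta"
    unfolding a0 using R_xc[of "\<lambda>j. - X j" 1] R_neg[of X] by simp
  moreover have "rho (X, 0, 0) = (\<Sum>k=1..n. rho (vscale (marks n k) (froot n k), 0, 0))"
    unfolding X_def by (rule R_sum)
  moreover have "(\<Sum>k=1..n. rho (vscale (marks n k) (froot n k), 0, 0)) = (\<Sum>k=1..n. marks n k)"
    using R_scale R_froot by (intro sum.cong) auto
  moreover have "(\<Sum>k=1..n. marks n k) = 2 * real n - 1"
  proof -
    have "(\<Sum>k=1..n. marks n k) = (\<Sum>k=1..n. 2 - (if k = n then 1 else 0))"
      by (intro sum.cong) (auto simp: marks_def)
    also have "\<dots> = 2 * real n - 1" using n2 by (simp add: sum_subtractf)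
    finally show ?thesis .
  qed
  ultimately show ?thesis by linarith
qed

end



lemma hsub_L0: "hsub Lambda0 (x, 1, b) = ((\<lambda>j. - x j), 0, - b)"
  by (simp add: hsub_def Lambda0_def vsub_def)

lemma dot_zero: "dot n (\<lambda>_. 0) q = 0" by (simp add: dot_def)

lemma dot_omega_rr: "dot n (omega_n n) (rr n) = real n * real n / 2"
proof -
  have "dot n (omega_n n) (rr n) = (\<Sum>j=1..n. (real n + 1/2) - real j)"
    unfolding dot_def omega_n_def rr_def
    by (intro sum.cong) (auto simp: field_simps)
  also have "\<dots> = real n * (real n + 1/2) - real n * (real n + 1) / 2"
    using sum_real_id[of n] by (simp add: sum_subtractf)
  also have "\<dots> = real n * real n / 2" by (simp add: field_simps)
  finally show ?thesis .
qed

lemma dot_omega_omega: "dot n (omega_n n) (omega_n n) = real n / 2"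
proof -
  have "dot n (omega_n n) (omega_n n) = (\<Sum>j=1..n. 1/2)"
    unfolding dot_def omega_n_def
    by (intro sum.cong) (auto simp: field_simps)
  then show ?thesis by simp
qed

theorem theorem4p11:
  fixes n :: nat and rho :: "hstar \<Rightarrow> real" and w :: "hstar \<Rightarrow> hstar"
  assumes "n \<ge> 2"
    and "\<forall>u v. rho (hadd u v) = rho u + rho v"
    and "\<forall>t u. rho (hscale t u) = t * rho u"
    and "\<forall>i \<in> {0..n}. rho (aroot n i) = 1"
    and "w \<in> Waff n"
  shows "LL rho (sigma_n n \<circ> w) = LL rho w"
proof -
  interpret rlin n rho using assms(1-4) by unfold_locales auto
  interpret V: vdat n "rr n" by (rule vdat_rr)
  have n1: "1 \<le> n" using assms(1) by simp
  obtain q u where wq: "w = transl n q \<circ> lift u" and qM: "q \<in> Mlat n" and uW: "u \<in> W0 n"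
    using assms(5) unfolding Waff_def by blast
  have spu: "sp n {1..n} u" using gen_sp[OF n1 _ uW[unfolded W0_def]] by simp
  have w0c: "w0 n \<in> W0 n" "w0 n (rr n) = (\<lambda>j. - rr n j)" using V.w0_char[OF n1] by auto
  have w0nc: "w0n n \<in> gen n {1..n-1}" "w0n n (rr n) = V.tA" using V.w0n_char[OF n1] by auto
  have sp0: "sp n {1..n} (w0 n)" using gen_sp[OF n1 _ w0c(1)[unfolded W0_def]] by simp
  have spn: "sp n {1..n-1} (w0n n)" using gen_sp[OF n1 _ w0nc(1)] by auto
  have qs: "\<forall>j. j \<notin> {1..n} \<longrightarrow> q j = 0" using qM unfolding Mlat_def by auto
  define gq where "gq = w0n n (w0 n q)"
  define om where "om = omega_n n"
  have gqs: "\<forall>j. j \<notin> {1..n} \<longrightarrow> gq j = 0"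
    unfolding gq_def using sp_supp[OF spn sp_supp[OF sp0 qs]] .
  have oms: "\<forall>j. j \<notin> {1..n} \<longrightarrow> om j = 0" unfolding om_def omega_n_def by auto
  have wL: "w Lambda0 = (q, 1, - (1/2 * dot n q q))"
    unfolding wq Lambda0_def
    by (simp add: lift_def transl_def sp_zero[OF spu] vadd_def vscale_def dot_zero)
  have sL: "(sigma_n n \<circ> w) Lambda0 = ((\<lambda>j. gq j + om j), 1,
      - (1/2 * dot n q q) - (dot n gq om + 1/2 * dot n om om))"
    using wL unfolding sigma_n_def gq_def om_def
    by (simp add: lift_def transl_def vadd_def vscale_def)
  have LLw: "LL rho w = - dot n q (rr n) + real n * dot n q q"
  proof -
    have "LL rho w = rho ((\<lambda>j. - q j), 0, 1/2 * dot n q q)"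
      unfolding LL_def wL hsub_L0 by simp
    also have "\<dots> = - rho (q, 0, 0) + 1/2 * dot n q q * (2 * real n)"
      using R_xc[of "\<lambda>j. - q j" "1/2 * dot n q q"] R_neg[of q] rho_delta by simp
    also have "rho (q, 0, 0) = dot n q (rr n)" using R_dot qs by simp
    finally show ?thesis by simp
  qed
  have LLs: "LL rho (sigma_n n \<circ> w) = - (dot n gq (rr n) + dot n om (rr n))
      + (1/2 * dot n q q + dot n gq om + 1/2 * dot n om om) * (2 * real n)"
  proof -
    have "LL rho (sigma_n n \<circ> w) = rho ((\<lambda>j. - (gq j + om j)), 0,
          1/2 * dot n q q + dot n gq om + 1/2 * dot n om om)"
      unfolding LL_def sL hsub_L0 by (simp add: algebra_simps)
    also have "\<dots> = - rho ((\<lambda>j. gq j + om j), 0, 0) + (1/2 * dot n q q + dot n gq om + 1/2 * dot n om om) * (2 * real n)"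
      using R_xc[of "\<lambda>j. - (gq j + om j)" "1/2 * dot n q q + dot n gq om + 1/2 * dot n om om"]
        R_neg[of "\<lambda>j. gq j + om j"] rho_delta by simp
    also have "rho ((\<lambda>j. gq j + om j), 0, 0) = dot n (\<lambda>j. gq j + om j) (rr n)"
      using R_dot gqs oms by simp
    also have "dot n (\<lambda>j. gq j + om j) (rr n) = dot n gq (rr n) + dot n om (rr n)"
      unfolding dot_def by (simp add: algebra_simps sum.distrib)
    finally show ?thesis .
  qed
  have K1: "dot n om (rr n) = real n * real n / 2" unfolding om_def by (rule dot_omega_rr)
  have K2: "dot n om om = real n / 2" unfolding om_def by (rule dot_omega_omega)
  have grr: "w0n n (w0 n (rr n)) = (\<lambda>j. - V.tA j)"
    using w0c(2) sp_neg[OF spn] w0nc(2) by simp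
  have "dot n gq (\<lambda>j. - V.tA j) = dot n q (rr n)"
    unfolding gq_def grr[symmetric] sp_dot[OF spn] sp_dot[OF sp0] ..
  moreover have "dot n gq (\<lambda>j. - V.tA j) = dot n gq (\<lambda>j. rr n j - 2 * real n * om j)"
    unfolding dot_def
  proof (rule sum.cong)
    fix j assume j: "j \<in> {1..n}"
    then have "real (n + 1 - j) = real n + 1 - real j" by (simp add: of_nat_diff)
    moreover have "n + 1 - j \<in> {1..n}" using j by auto
    ultimately have "- V.tA j = - (2 * real j - 1) / sqrt 2"
      unfolding V.tA_def unfolding rr_def using j by (simp add: algebra_simps minus_divide_left)
    also have "\<dots> = rr n j - 2 * real n * om j"
      unfolding rr_def om_def omega_n_def using j by (simp add: field_simps)
    finally show "gq j * - V.tA j = gq j * (rr n j - 2 * real n * om j)" by simp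
  qed simp
  moreover have "dot n gq (\<lambda>j. rr n j - 2 * real n * om j) = dot n gq (rr n) - 2 * real n * dot n gq om"
    unfolding dot_def by (simp add: algebra_simps sum_subtractf sum_distrib_left)
  ultimately have K3: "dot n gq (rr n) - 2 * real n * dot n gq om = dot n q (rr n)" by simp
  show ?thesis unfolding LLw LLs using K1 K2 K3 by (simp add: algebra_simps)
qed

end
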